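(* Let $\mathcal S\in\Sigma^n$ be a string and $\pi:[n]\to[n]$ be an order-preserving permutation for $\mathcal S$. Let $i>1$ be an irreducible $\mathrm{LPF}_\pi$ position. Then, for every $j>1$ with $\pi(j-1)<\pi(i-1)$ and $\mathrm{rlce}(i,j)=\mathrm{LPF}_\pi[i]$, it holds that $\mathcal S[i-1]\ne\mathcal S[j-1]$.
   Context: For $i\ne j$, $\mathrm{rlce}(i,j)$ is the length of the longest common prefix of $\mathcal S[i,n]$ and $\mathcal S[j,n]$. A permutation $\pi:[n]\to[n]$ is order-preserving for $\mathcal S$ if for all $i,j\in[n-1]$, $\pi(i)<\pi(j)$ and $\mathcal S[i,i+1]=\mathcal S[j,j+1]$ imply $\pi(i+1)<\pi(j+1)$. $\mathrm{LPF}_\pi[i]=0$ if $\pi(i)=1$, else $\mathrm{LPF}_\pi[i]=\max_{\pi(j)<\pi(i)}\mathrm{rlce}(j,i)$. A position $i\in[n]$ is an irreducible $\mathrm{LPF}_\pi$ position if $i=1$ or $\mathrm{LPF}_\pi[i]\ne\mathrm{LPF}_\pi[i-1]-1$. *)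

theory Defs
  imports Main
begin

text \<open>Strings are lists; positions are 1-based: the character S[i] is S ! (i - 1), for i in [n] = {1..n}.\<close>

definition chr :: "'a list \<Rightarrow> nat \<Rightarrow> 'a" where
  "chr S i = S ! (i - 1)"

fun lcp :: "'a list \<Rightarrow> 'a list \<Rightarrow> nat" where
  "lcp (x # xs) (y # ys) = (if x = y then Suc (lcp xs ys) else 0)"
| "lcp _ _ = 0"

definition rlce :: "'a list \<Rightarrow> nat \<Rightarrow> nat \<Rightarrow> nat" where
  "rlce S i j = lcp (drop (i - 1) S) (drop (j - 1) S)"

definition order_preserving :: "'a list \<Rightarrow> (nat \<Rightarrow> nat) \<Rightarrow> bool" where
  "order_preserving S \<pi> \<longleftrightarrow>
     bij_betw \<pi> {1..length S} {1..length S} \<and>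
     (\<forall>i \<in> {1..length S - 1}. \<forall>j \<in> {1..length S - 1}.
        \<pi> i < \<pi> j \<and> chr S i = chr S j \<and> chr S (i+1) = chr S (j+1)
          \<longrightarrow> \<pi> (i+1) < \<pi> (j+1))"

definition LPF :: "'a list \<Rightarrow> (nat \<Rightarrow> nat) \<Rightarrow> nat \<Rightarrow> nat" where
  "LPF S \<pi> i = (if \<pi> i = 1 then 0
     else Max {rlce S j i | j. j \<in> {1..length S} \<and> \<pi> j < \<pi> i})"

text \<open>Irreducibility compares in the integers, so that LPF[i-1] - 1 may be -1.\<close>
definition irreducible_LPF :: "'a list \<Rightarrow> (nat \<Rightarrow> nat) \<Rightarrow> nat \<Rightarrow> bool" where
  "irreducible_LPF S \<pi> i \<longleftrightarrow> i \<in> {1..length S} \<and>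
     (i = 1 \<or> int (LPF S \<pi> i) \<noteq> int (LPF S \<pi> (i - 1)) - 1)"

end

theory Submission
  imports Defs
begin

lemma lcp_comm: "lcp xs ys = lcp ys xs"
  by (induction xs ys rule: lcp.induct) auto

lemma rlce_comm: "rlce S a b = rlce S b a"
  unfolding rlce_def using lcp_comm by metis

lemma rlce_pos: assumes "rlce S a b > 0" "a \<ge> 1" "b \<ge> 1"
  shows "a \<le> length S \<and> b \<le> length S"
proof (rule ccontr)
  assume "\<not> ?thesis"
  then have "drop (a - 1) S = [] \<or> drop (b - 1) S = []" by auto
  then show False using assms(1) unfolding rlce_def
    by (metis lcp.simps(2) lcp.simps(3) less_irrefl neq_Nil_conv)
qed

lemma rlce_step: assumes "a \<ge> 1" "b \<ge> 1" "a \<le> length S" "b \<le> length S"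
  shows "rlce S a b = (if chr S a = chr S b then Suc (rlce S (a+1) (b+1)) else 0)"
proof -
  have "drop (a - 1) S = S ! (a - 1) # drop a S"
    using assms by (metis Cons_nth_drop_Suc Suc_diff_1 Suc_le_lessD diff_less le_eq_less_or_eq less_one not_le)
  moreover have "drop (b - 1) S = S ! (b - 1) # drop b S"
    using assms by (metis Cons_nth_drop_Suc Suc_diff_1 Suc_le_lessD diff_less le_eq_less_or_eq less_one not_le)
  ultimately show ?thesis unfolding rlce_def chr_def by simp
qed

lemma LPF_ge: assumes "\<pi> x \<noteq> 1" "j \<in> {1..length S}" "\<pi> j < \<pi> x"
  shows "rlce S j x \<le> LPF S \<pi> x"
proof -
  have fin: "finite {rlce S j x | j. j \<in> {1..length S} \<and> \<pi> j < \<pi> x}"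
    by (rule finite_subset[of _ "(\<lambda>j. rlce S j x) ` {1..length S}"]) auto
  have "rlce S j x \<in> {rlce S j x | j. j \<in> {1..length S} \<and> \<pi> j < \<pi> x}" using assms by blast
  then show ?thesis unfolding LPF_def using assms Max_ge[OF fin] by simp
qed

lemma LPF_attained: assumes "\<pi> x \<noteq> 1" "j \<in> {1..length S}" "\<pi> j < \<pi> x"
  shows "\<exists>k. k \<in> {1..length S} \<and> \<pi> k < \<pi> x \<and> rlce S k x = LPF S \<pi> x"
proof -
  have fin: "finite {rlce S j x | j. j \<in> {1..length S} \<and> \<pi> j < \<pi> x}"
    by (rule finite_subset[of _ "(\<lambda>j. rlce S j x) ` {1..length S}"]) auto
  have "Max {rlce S j x | j. j \<in> {1..length S} \<and> \<pi> j < \<pi> x} \<in> {rlce S j x | j. j \<in> {1..length S} \<and> \<pi> j < \<pi> x}"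
    using assms by (intro Max_in[OF fin]) auto
  then show ?thesis unfolding LPF_def using assms by auto
qed

theorem lemma14:
  fixes S :: "'a list" and \<pi> :: "nat \<Rightarrow> nat" and i j :: nat
  assumes "order_preserving S \<pi>"
    and "i > 1" and "irreducible_LPF S \<pi> i"
    and "j > 1" and "j \<le> length S"
    and "\<pi> (j - 1) < \<pi> (i - 1)"
    and "rlce S i j = LPF S \<pi> i"
  shows "chr S (i - 1) \<noteq> chr S (j - 1)"
proof
  assume eq: "chr S (i - 1) = chr S (j - 1)"
  let ?n = "length S"
  have bij: "bij_betw \<pi> {1..?n} {1..?n}" and op: "\<And>a b. a \<in> {1..?n - 1} \<Longrightarrow> b \<in> {1..?n - 1} \<Longrightarrow>
        \<pi> a < \<pi> b \<Longrightarrow> chr S a = chr S b \<Longrightarrow> chr S (a+1) = chr S (b+1) \<Longrightarrow> \<pi> (a+1) < \<pi> (b+1)"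
    using assms(1) unfolding order_preserving_def by blast+
  have iS: "i \<le> ?n" and irr: "int (LPF S \<pi> i) \<noteq> int (LPF S \<pi> (i - 1)) - 1"
    using assms(2,3) unfolding irreducible_LPF_def by auto
  have j1: "j - 1 \<in> {1..?n}" using assms by auto
  have "\<pi> (j - 1) \<in> {1..?n}" using bij j1 by (auto simp: bij_betw_def)
  then have pi1: "\<pi> (i - 1) \<noteq> 1" using assms(6) by auto
  have "rlce S (j - 1) (i - 1) = Suc (rlce S j i)"
    using rlce_step[of "j - 1" "i - 1" S] eq assms(2,4,5) iS by auto
  then have r1: "rlce S (j - 1) (i - 1) = Suc (LPF S \<pi> i)"
    using assms(7) rlce_comm by metis
  have lo: "Suc (LPF S \<pi> i) \<le> LPF S \<pi> (i - 1)"
    using LPF_ge[OF pi1 j1 assms(6)] r1 by simp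
  obtain k where k: "k \<in> {1..?n}" "\<pi> k < \<pi> (i - 1)" "rlce S k (i - 1) = LPF S \<pi> (i - 1)"
    using LPF_attained[OF pi1 j1 assms(6)] by blast
  have hi: "LPF S \<pi> (i - 1) \<le> Suc (LPF S \<pi> i)"
  proof (cases "LPF S \<pi> (i - 1) \<ge> 2")
    case False then show ?thesis by simp
  next
    case True
    have kr: "rlce S k (i - 1) = (if chr S k = chr S (i - 1) then Suc (rlce S (k+1) (i - 1 + 1)) else 0)"
      using rlce_step[of k "i - 1" S] k(1) assms(2) iS by auto
    have ch: "chr S k = chr S (i - 1)" and r2: "rlce S (k+1) i = LPF S \<pi> (i - 1) - 1"
      using kr k(3) True assms(2) by (auto split: if_splits)
    then have "rlce S (k+1) i > 0" using True by simp
    then have kn: "k + 1 \<le> ?n" using rlce_pos[of S "k+1" i] assms(2) by simp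
    have kr2: "rlce S (k+1) i = (if chr S (k+1) = chr S i then Suc (rlce S (k+2) (i+1)) else 0)"
      using rlce_step[of "k+1" i S] kn iS assms(2) by auto
    have ch2: "chr S (k+1) = chr S i" using kr2 r2 True by (auto split: if_splits)
    have "\<pi> (k+1) < \<pi> (i - 1 + 1)"
    proof (rule op)
      show "k \<in> {1..?n - 1}" using k(1) kn by auto
      show "i - 1 \<in> {1..?n - 1}" using iS assms(2) by auto
    qed (use k(2) ch ch2 assms(2) in auto)
    then have lt: "\<pi> (k+1) < \<pi> i" using assms(2) by simp
    have "k + 1 \<in> {1..?n}" using kn by auto
    then have "\<pi> (k+1) \<in> {1..?n}" using bij by (auto simp: bij_betw_def)
    then have "\<pi> i \<noteq> 1" using lt by auto
    then have "rlce S (k+1) i \<le> LPF S \<pi> i" using LPF_ge[of \<pi> i "k+1" S] lt kn by auto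
    then show ?thesis using r2 by simp
  qed
  have "LPF S \<pi> (i - 1) = Suc (LPF S \<pi> i)" using lo hi by simp
  then show False using irr by simp
qed

end
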